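(* Let $L$ be a real-valued Lévy process which is a special semimartingale with characteristic triplet $(b,0,F)$ with respect to the truncation function $h(x)=x$, where $F(dx)=f(x)dx$. Suppose $f_s(x)=\frac{C}{|x|^{1+Y}}+g(x)$ with a constant $C>0$ and $g(x)=O\big(|x|^{-(1+Y-\delta)}\big)$ as $x\to0$ for some $\delta>0$. Then $L$ has Sobolev index $Y$ in each of the following cases: (a) $0<Y<1$, $f_{as}(x)=O(|x|^{-\alpha})$ as $x\to0$ for some $\alpha\le1+Y$, $\int|xf_{as}(x)|dx<\infty$, and $b=\int xF(dx)$; (b) $Y=1$ and $f_{as}(x)=O(|x|^{-\alpha})$ as $x\to0$ for some $\alpha<2$; (c) $1<Y<2$.
   Context: $f_s(x)=\frac12(f(x)+f(-x))$, $f_{as}(x)=\frac12(f(x)-f(-x))$. The symbol of the process is $A(u)=iub-\int\big(e^{-iux}-1+iux\big)F(dx)$, $u\in\mathds R$. The symbol (and the process) has Sobolev index $Y\in(0,2]$ if there are $0\le\beta<Y$ and constants $C_1,C_3\ge0$, $C_2>0$ with $|A(u)|\le C_1(1+u^2)^{Y/2}$ and $\Re(A(u))\ge C_2|u|^Y-C_3(1+u^2)^{\beta/2}$ for all $u\in\mathds R$. $h(x)=O(k(x))$ as $x\to0$ means $|h(x)|/|k(x)|$ is bounded for $x$ in some punctured neighbourhood of $0$. *)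

theory Defs
  imports "HOL-Analysis.Analysis" "HOL-Library.Landau_Symbols"
begin

definition f_sym :: "(real \<Rightarrow> real) \<Rightarrow> real \<Rightarrow> real" where
  "f_sym f x = (f x + f (- x)) / 2"

definition f_asym :: "(real \<Rightarrow> real) \<Rightarrow> real \<Rightarrow> real" where
  "f_asym f x = (f x - f (- x)) / 2"

text \<open>Symbol of the Levy process with triplet (b,0,F), F(dx) = f(x) dx, truncation h(x)=x:
  A(u) = i u b - int (exp(-iux) - 1 + iux) F(dx).\<close>
definition levy_symbol :: "real \<Rightarrow> (real \<Rightarrow> real) \<Rightarrow> real \<Rightarrow> complex" where
  "levy_symbol b f u =
     \<i> * complex_of_real (u * b)
     - (\<integral>x. (exp (- (\<i> * complex_of_real (u * x))) - 1 + \<i> * complex_of_real (u * x))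
              * complex_of_real (f x) \<partial>lborel)"

definition has_sobolev_index :: "(real \<Rightarrow> complex) \<Rightarrow> real \<Rightarrow> bool" where
  "has_sobolev_index A Y \<longleftrightarrow> 0 < Y \<and> Y \<le> 2 \<and>
     (\<exists>\<beta> C1 C2 C3. 0 \<le> \<beta> \<and> \<beta> < Y \<and> C1 \<ge> 0 \<and> C2 > 0 \<and> C3 \<ge> 0 \<and>
        (\<forall>u::real. cmod (A u) \<le> C1 * (1 + u\<^sup>2) powr (Y / 2) \<and>
                   Re (A u) \<ge> C2 * \<bar>u\<bar> powr Y - C3 * (1 + u\<^sup>2) powr (\<beta> / 2)))"

end

theory Submission
  imports Defs
begin
lemma one_minus_cos_le: "1 - cos (t::real) \<le> t\<^sup>2 / 2"
proof -
  have "cos t = 1 - 2 * sin (t/2) ^ 2" using cos_double_sin[of "t/2"] by simp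
  moreover have "sin (t/2) ^ 2 \<le> (t/2)^2"
    using abs_sin_x_le_abs_x[of "t/2"] by (metis abs_ge_zero power2_abs power_mono)
  ultimately show ?thesis by (simp add: power_divide)
qed

lemma pow_int0:
  assumes "p > -1" "c > 0"
  shows "integrable lborel (\<lambda>x. indicator {-c..c} x * \<bar>x\<bar> powr p :: real)"
proof -
  have "(\<lambda>t. t powr p) integrable_on {0..c}" by (rule integrable_on_powr_from_0) (use assms in auto)
  hence "(\<lambda>t. t powr p) absolutely_integrable_on {0..c}"
    by (subst absolutely_integrable_on_iff_nonneg) auto
  hence h: "integrable lborel (\<lambda>x. indicator {0..c} x * x powr p :: real)"
    unfolding set_integrable_def by (subst (asm) integrable_completion) auto
  have h2: "integrable lborel (\<lambda>x. indicator {0..c} (-x) * (-x) powr p :: real)"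
    using lborel_integrable_real_affine[OF h, of "-1" 0] by simp
  show ?thesis
  proof (rule Bochner_Integration.integrable_bound[OF Bochner_Integration.integrable_add[OF h h2]])
    show "(\<lambda>x. indicator {-c..c} x * \<bar>x\<bar> powr p :: real) \<in> borel_measurable lborel" by measurable
    show "AE x in lborel. norm (indicator {-c..c} x * \<bar>x\<bar> powr p :: real) \<le>
      norm (indicator {0..c} x * x powr p + indicator {0..c} (-x) * (-x) powr p :: real)"
      by (intro AE_I2) (auto simp: indicator_def)
  qed
qed

lemma pow_intinf:
  assumes "q < -1" "c > 0"
  shows "integrable lborel (\<lambda>x. indicator {x. c \<le> \<bar>x\<bar>} x * \<bar>x\<bar> powr q :: real)"
proof -
  have "(\<lambda>t. t powr q) integrable_on {c..}" using has_integral_powr_to_inf[OF assms] by blast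
  hence "(\<lambda>t. t powr q) absolutely_integrable_on {c..}"
    by (subst absolutely_integrable_on_iff_nonneg) auto
  hence h: "integrable lborel (\<lambda>x. indicator {c..} x * x powr q :: real)"
    unfolding set_integrable_def by (subst (asm) integrable_completion) auto
  have h2: "integrable lborel (\<lambda>x. indicator {c..} (-x) * (-x) powr q :: real)"
    using lborel_integrable_real_affine[OF h, of "-1" 0] by simp
  show ?thesis
  proof (rule Bochner_Integration.integrable_bound[OF Bochner_Integration.integrable_add[OF h h2]])
    show "(\<lambda>x. indicator {x. c \<le> \<bar>x\<bar>} x * \<bar>x\<bar> powr q :: real) \<in> borel_measurable lborel" by measurable
    show "AE x in lborel. norm (indicator {x. c \<le> \<bar>x\<bar>} x * \<bar>x\<bar> powr q :: real) \<le>
      norm (indicator {c..} x * x powr q + indicator {c..} (-x) * (-x) powr q :: real)"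
      using assms by (intro AE_I2) (auto simp: indicator_def)
  qed
qed

lemma scaling:
  fixes H :: "real \<Rightarrow> real" and u Y :: real
  assumes H0: "H 0 = 0" and int: "integrable lborel (\<lambda>t. H t * \<bar>t\<bar> powr (-1-Y))"
  shows "integrable lborel (\<lambda>x. H (u*x) * \<bar>x\<bar> powr (-1-Y)) \<and>
     (\<integral>x. H (u*x) * \<bar>x\<bar> powr (-1-Y) \<partial>lborel) = \<bar>u\<bar> powr Y * (\<integral>t. H t * \<bar>t\<bar> powr (-1-Y) \<partial>lborel)"
proof (cases "u = 0")
  case True then show ?thesis by (simp add: H0)
next
  case False
  let ?F = "\<lambda>x. H (u*x) * \<bar>x\<bar> powr (-1-Y)"
  have eq: "?F (0 + (1/u) * x) = \<bar>u\<bar> powr (1+Y) * (H x * \<bar>x\<bar> powr (-1-Y))" for x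
  proof -
    have "\<bar>x/u\<bar> powr (-1-Y) = \<bar>x\<bar> powr (-1-Y) / \<bar>u\<bar> powr (-1-Y)"
      by (simp add: abs_divide powr_divide)
    also have "\<dots> = \<bar>x\<bar> powr (-1-Y) * \<bar>u\<bar> powr (1+Y)"
    proof -
      have e: "\<bar>u\<bar> powr (-1-Y) = inverse (\<bar>u\<bar> powr (1+Y))"
        using powr_minus[of "\<bar>u\<bar>" "1+Y"] by (simp add: minus_add)
      show ?thesis by (subst e) (simp add: divide_inverse)
    qed
    finally show ?thesis using False by (simp add: mult_ac)
  qed
  have "integrable lborel (\<lambda>x. ?F (0 + (1/u) * x))"
    unfolding eq using int by simp
  hence I: "integrable lborel ?F" using lborel_integrable_real_affine_iff[of "1/u" ?F 0] False by simp
  have "(\<integral>x. ?F x \<partial>lborel) = \<bar>1/u\<bar> *\<^sub>R (\<integral>x. ?F (0 + (1/u) * x) \<partial>lborel)"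
    by (rule lborel_integral_real_affine) (use False in simp)
  also have "\<dots> = \<bar>1/u\<bar> * \<bar>u\<bar> powr (1+Y) * (\<integral>t. H t * \<bar>t\<bar> powr (-1-Y) \<partial>lborel)"
    unfolding eq by simp
  also have "\<bar>1/u\<bar> * \<bar>u\<bar> powr (1+Y) = \<bar>u\<bar> powr Y"
    using False by (simp add: powr_add abs_divide)
  finally show ?thesis using I by simp
qed

lemma reflect:
  fixes g :: "real \<Rightarrow> real"
  assumes "integrable lborel g"
  shows "integrable lborel (\<lambda>x. g (-x)) \<and> (\<integral>x. g (-x) \<partial>lborel) = (\<integral>x. g x \<partial>lborel)"
  using lborel_integrable_real_affine[OF assms, of "-1" 0] lborel_integral_real_affine[of "-1" g 0]
  by simp

lemma K_int:
  fixes H :: "real \<Rightarrow> real" and Y p q a b :: real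
  assumes Hm: "H \<in> borel_measurable borel"
    and p: "p - 1 - Y > -1" and q: "q - 1 - Y < -1" and a: "a \<ge> 0" and b: "b \<ge> 0"
    and near: "\<And>t. \<bar>t\<bar> \<le> 1 \<Longrightarrow> \<bar>H t\<bar> \<le> a * \<bar>t\<bar> powr p"
    and far: "\<And>t. 1 \<le> \<bar>t\<bar> \<Longrightarrow> \<bar>H t\<bar> \<le> b * \<bar>t\<bar> powr q"
  shows "integrable lborel (\<lambda>t. H t * \<bar>t\<bar> powr (-1-Y))"
proof (rule Bochner_Integration.integrable_bound)
  define G where "G t = a * (indicator {-1..1} t * \<bar>t\<bar> powr (p-1-Y))
      + b * (indicator {x. 1 \<le> \<bar>x\<bar>} t * \<bar>t\<bar> powr (q-1-Y))" for t :: real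
  show "integrable lborel G"
    unfolding G_def using pow_int0[OF p, of 1] pow_intinf[OF q, of 1] by auto
  show "(\<lambda>t. H t * \<bar>t\<bar> powr (-1-Y)) \<in> borel_measurable lborel"
    using Hm by measurable
  show "AE t in lborel. norm (H t * \<bar>t\<bar> powr (-1-Y)) \<le> norm (G t)"
  proof (intro AE_I2)
    fix t :: real
    have G1: "0 \<le> a * (indicator {-1..1} t * \<bar>t\<bar> powr (p-1-Y))" using a by (simp add: indicator_def)
    have G2: "0 \<le> b * (indicator {x. 1 \<le> \<bar>x\<bar>} t * \<bar>t\<bar> powr (q-1-Y))" using b by (simp add: indicator_def)
    have nG: "norm (G t) = G t" unfolding G_def using G1 G2 by simp
    have L: "norm (H t * \<bar>t\<bar> powr (-1-Y)) = \<bar>H t\<bar> * \<bar>t\<bar> powr (-1-Y)"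
      by (simp add: abs_mult)
    show "norm (H t * \<bar>t\<bar> powr (-1-Y)) \<le> norm (G t)"
    proof (cases "t = 0")
      case True then show ?thesis by simp
    next
      case False
      have pp: "\<bar>t\<bar> powr (p-1-Y) = \<bar>t\<bar> powr p * \<bar>t\<bar> powr (-1-Y)"
          "\<bar>t\<bar> powr (q-1-Y) = \<bar>t\<bar> powr q * \<bar>t\<bar> powr (-1-Y)"
      proof -
        have "p-1-Y = p + (-1-Y)" "q-1-Y = q + (-1-Y)" by simp_all
        then show "\<bar>t\<bar> powr (p-1-Y) = \<bar>t\<bar> powr p * \<bar>t\<bar> powr (-1-Y)"
          "\<bar>t\<bar> powr (q-1-Y) = \<bar>t\<bar> powr q * \<bar>t\<bar> powr (-1-Y)"
          by (metis powr_add)+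
      qed
      show ?thesis
      proof (cases "\<bar>t\<bar> \<le> 1")
        case True
        have "\<bar>H t\<bar> * \<bar>t\<bar> powr (-1-Y) \<le> a * \<bar>t\<bar> powr p * \<bar>t\<bar> powr (-1-Y)"
          by (intro mult_right_mono near True) simp
        also have "\<dots> = a * (indicator {-1..1} t * \<bar>t\<bar> powr (p-1-Y))"
          using True by (simp add: pp indicator_def abs_le_iff)
        also have "\<dots> \<le> G t" unfolding G_def using G2 by linarith
        finally show ?thesis using L nG by simp
      next
        case False
        have "\<bar>H t\<bar> * \<bar>t\<bar> powr (-1-Y) \<le> b * \<bar>t\<bar> powr q * \<bar>t\<bar> powr (-1-Y)"
          by (intro mult_right_mono far) (use False in auto)
        also have "\<dots> = b * (indicator {x. 1 \<le> \<bar>x\<bar>} t * \<bar>t\<bar> powr (q-1-Y))"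
          using False by (simp add: pp indicator_def)
        also have "\<dots> \<le> G t" unfolding G_def using G1 by linarith
        finally show ?thesis using L nG by simp
      qed
    qed
  qed
qed


lemma abs_powr2: "\<bar>t::real\<bar> powr 2 = t\<^sup>2"
  by (cases "t = 0") (simp_all add: powr_numeral)

lemma sin_diff_le: "\<bar>t - sin (t::real)\<bar> \<le> \<bar>t\<bar>^3 / 6"
proof -
  have "\<bar>sin t - (\<Sum>m<3. sin_coeff m * t ^ m)\<bar> \<le> inverse (fact 3) * \<bar>t\<bar> ^ 3"
    by (rule Maclaurin_sin_bound)
  then show ?thesis by (simp add: numeral_3_eq_3 sin_coeff_def fact_numeral abs_minus_commute)
qed

lemma sin_diff_le2: "\<bar>t - sin (t::real)\<bar> \<le> 2 * \<bar>t\<bar>"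
  using abs_sin_x_le_abs_x[of t] by linarith

lemma K1: fixes Y :: real assumes "0 < Y" "Y < 2"
  shows "integrable lborel (\<lambda>t. (1 - cos t) * \<bar>t\<bar> powr (-1-Y))"
proof (rule K_int[where H="\<lambda>t. 1 - cos t" and Y=Y and p=2 and q=0 and a="1/2" and b=2])
  show "(\<lambda>t::real. 1 - cos t) \<in> borel_measurable borel"
    by measurable
  fix t :: real
  show "\<bar>1 - cos t\<bar> \<le> 1/2 * \<bar>t\<bar> powr 2" using one_minus_cos_le[of t]
    by (simp add: abs_powr2)
  assume "1 \<le> \<bar>t\<bar>"
  then show "\<bar>1 - cos t\<bar> \<le> 2 * \<bar>t\<bar> powr 0" using cos_ge_minus_one[of t] cos_le_one[of t] by auto
qed (use assms in auto)

lemma K2: fixes Y :: real assumes "1 < Y" "Y < 2"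
  shows "integrable lborel (\<lambda>t. \<bar>t - sin t\<bar> * \<bar>t\<bar> powr (-1-Y))"
proof (rule K_int[where H="\<lambda>t. \<bar>t - sin t\<bar>" and Y=Y and p=2 and q=1 and a=1 and b=2])
  show "(\<lambda>t::real. \<bar>t - sin t\<bar>) \<in> borel_measurable borel"
    by measurable
  fix t :: real
  show "\<bar>\<bar>t - sin t\<bar>\<bar> \<le> 1 * \<bar>t\<bar> powr 2" if "\<bar>t\<bar> \<le> 1"
  proof -
    have "\<bar>t\<bar>^3 \<le> \<bar>t\<bar>^2" using power_decreasing[of 2 3 "\<bar>t\<bar>"] that by simp
    then show ?thesis using sin_diff_le[of t] by (simp add: abs_powr2, smt (verit) abs_ge_zero zero_le_power)
  qed
  show "\<bar>\<bar>t - sin t\<bar>\<bar> \<le> 2 * \<bar>t\<bar> powr 1" if "1 \<le> \<bar>t\<bar>"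
    using sin_diff_le2[of t] that by simp
qed (use assms in auto)

lemma K3: fixes Y :: real assumes "0 < Y" "Y < 1"
  shows "integrable lborel (\<lambda>t. \<bar>sin t\<bar> * \<bar>t\<bar> powr (-1-Y))"
proof (rule K_int[where H="\<lambda>t. \<bar>sin t\<bar>" and Y=Y and p=1 and q=0 and a=1 and b=1])
  show "(\<lambda>t::real. \<bar>sin t\<bar>) \<in> borel_measurable borel"
    by measurable
  fix t :: real
  show "\<bar>\<bar>sin t\<bar>\<bar> \<le> 1 * \<bar>t\<bar> powr 1" using abs_sin_x_le_abs_x[of t] by simp
  assume "1 \<le> \<bar>t\<bar>"
  then show "\<bar>\<bar>sin t\<bar>\<bar> \<le> 1 * \<bar>t\<bar> powr 0" by auto
qed (use assms in auto)

lemma exp_part: "exp (- (\<i> * complex_of_real t)) - 1 + \<i> * complex_of_real t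
   = complex_of_real (cos t - 1) + \<i> * complex_of_real (t - sin t)"
proof -
  have "exp (- (\<i> * complex_of_real t)) = cis (-t)" by (simp add: cis_conv_exp)
  then show ?thesis by (simp add: complex_eq_iff)
qed

lemma symbol_decomp:
  fixes f :: "real \<Rightarrow> real"
  assumes R: "integrable lborel (\<lambda>x. (1 - cos (u*x)) * f x)"
    and I: "integrable lborel (\<lambda>x. (u*x - sin (u*x)) * f x)"
  shows "Re (levy_symbol b f u) = (\<integral>x. (1 - cos (u*x)) * f x \<partial>lborel)"
    "Im (levy_symbol b f u) = u * b - (\<integral>x. (u*x - sin (u*x)) * f x \<partial>lborel)"
proof -
  have R': "integrable lborel (\<lambda>x. (cos (u*x) - 1) * f x)"
    using integrable_minus[OF R] by (simp add: algebra_simps)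
  have eq: "(\<lambda>x. (exp (- (\<i> * complex_of_real (u * x))) - 1 + \<i> * complex_of_real (u * x)) * complex_of_real (f x))
     = (\<lambda>x. complex_of_real ((cos (u*x) - 1) * f x) + \<i> * complex_of_real ((u*x - sin (u*x)) * f x))"
    by (rule ext, subst exp_part) (simp add: algebra_simps)
  have int: "(\<integral>x. complex_of_real ((cos (u*x) - 1) * f x) + \<i> * complex_of_real ((u*x - sin (u*x)) * f x) \<partial>lborel)
     = complex_of_real (\<integral>x. (cos (u*x) - 1) * f x \<partial>lborel) + \<i> * complex_of_real (\<integral>x. (u*x - sin (u*x)) * f x \<partial>lborel)"
  proof -
    have i1: "complex_integrable lborel (\<lambda>x. complex_of_real ((cos (u*x) - 1) * f x))"
      by (rule integrable_of_real[OF R'])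
    have i2: "complex_integrable lborel (\<lambda>x. \<i> * complex_of_real ((u*x - sin (u*x)) * f x))"
      by (rule Bochner_Integration.integrable_mult_right[OF integrable_of_real[OF I]])
    show ?thesis
      by (simp only: Bochner_Integration.integral_add[OF i1 i2] integral_mult_right_zero integral_complex_of_real)
  qed
  have "(\<integral>x. (cos (u*x) - 1) * f x \<partial>lborel) = - (\<integral>x. (1 - cos (u*x)) * f x \<partial>lborel)"
    by (subst integral_minus[symmetric]) (simp add: algebra_simps)
  then show "Re (levy_symbol b f u) = (\<integral>x. (1 - cos (u*x)) * f x \<partial>lborel)"
    "Im (levy_symbol b f u) = u * b - (\<integral>x. (u*x - sin (u*x)) * f x \<partial>lborel)"
    unfolding levy_symbol_def eq int by simp_all
qed

lemma odd_sym:
  fixes f h :: "real \<Rightarrow> real"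
  assumes I: "integrable lborel (\<lambda>x. h x * f x)" and odd: "\<And>x. h (-x) = - h x"
  shows "integrable lborel (\<lambda>x. h x * f_asym f x) \<and>
    (\<integral>x. h x * f_asym f x \<partial>lborel) = (\<integral>x. h x * f x \<partial>lborel)"
proof -
  from reflect[OF I] have "integrable lborel (\<lambda>x. - (h x * f (-x)))"
     "(\<integral>x. - (h x * f (-x)) \<partial>lborel) = (\<integral>x. h x * f x \<partial>lborel)"
    by (simp_all add: odd)
  hence I2: "integrable lborel (\<lambda>x. h x * f (-x))"
    and E2: "(\<integral>x. h x * f (-x) \<partial>lborel) = - (\<integral>x. h x * f x \<partial>lborel)"
    by (simp_all add: integral_minus)
  have eq: "(\<lambda>x. h x * f_asym f x) = (\<lambda>x. (h x * f x - h x * f (-x)) / 2)"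
    by (simp add: f_asym_def algebra_simps)
  show ?thesis unfolding eq using I I2 E2
    by (simp add: Bochner_Integration.integral_diff)
qed

lemma even_sym:
  fixes f h :: "real \<Rightarrow> real"
  assumes I: "integrable lborel (\<lambda>x. h x * f x)" and even: "\<And>x. h (-x) = h x"
  shows "integrable lborel (\<lambda>x. h x * f_sym f x) \<and>
    (\<integral>x. h x * f_sym f x \<partial>lborel) = (\<integral>x. h x * f x \<partial>lborel)"
proof -
  from reflect[OF I] have I2: "integrable lborel (\<lambda>x. h x * f (-x))"
     and E2: "(\<integral>x. h x * f (-x) \<partial>lborel) = (\<integral>x. h x * f x \<partial>lborel)"
    by (simp_all add: even)
  have eq: "(\<lambda>x. h x * f_sym f x) = (\<lambda>x. (h x * f x + h x * f (-x)) / 2)"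
    by (simp add: f_sym_def algebra_simps)
  show ?thesis unfolding eq using I I2 E2
    by simp
qed

lemma bigO_at0:
  fixes h :: "real \<Rightarrow> real"
  assumes "h \<in> O[at 0](\<lambda>x. \<bar>x\<bar> powr e)"
  obtains K d where "K > 0" "d > 0" "\<And>x. x \<noteq> 0 \<Longrightarrow> \<bar>x\<bar> < d \<Longrightarrow> \<bar>h x\<bar> \<le> K * \<bar>x\<bar> powr e"
proof -
  from assms obtain c where c: "c > 0" "eventually (\<lambda>x. norm (h x) \<le> c * norm (\<bar>x\<bar> powr e)) (at 0)"
    by (auto elim: landau_o.bigE)
  from c(2) obtain d where "d > 0" "\<forall>x. x \<noteq> 0 \<and> dist x 0 < d \<longrightarrow> norm (h x) \<le> c * norm (\<bar>x\<bar> powr e)"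
    unfolding eventually_at by auto
  then show ?thesis using c(1) that[of c d] by auto
qed


lemma eps_sym:
  fixes f :: "real \<Rightarrow> real" and C Y \<delta> :: real
  assumes g_bound: "(\<lambda>x. f_sym f x - C / \<bar>x\<bar> powr (1 + Y))
                    \<in> O[at 0](\<lambda>x. \<bar>x\<bar> powr (- (1 + Y - \<delta>)))"
    and C: "C > 0" and \<delta>: "\<delta> > 0"
  obtains \<epsilon> where "0 < \<epsilon>" "\<epsilon> \<le> 1"
    "\<And>x. x \<noteq> 0 \<Longrightarrow> \<bar>x\<bar> < \<epsilon> \<Longrightarrow> C/2 * \<bar>x\<bar> powr (-1-Y) \<le> f_sym f x \<and> f_sym f x \<le> 3*C/2 * \<bar>x\<bar> powr (-1-Y)"
proof -
  obtain K d where K: "K > 0" and d: "d > 0" and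
    B: "\<And>x. x \<noteq> 0 \<Longrightarrow> \<bar>x\<bar> < d \<Longrightarrow> \<bar>f_sym f x - C / \<bar>x\<bar> powr (1 + Y)\<bar> \<le> K * \<bar>x\<bar> powr (- (1 + Y - \<delta>))"
    using bigO_at0[OF g_bound] by blast
  define d2 where "d2 = (C/(2*K)) powr (1/\<delta>)"
  have d2: "d2 > 0" using C K by (simp add: d2_def)
  have d2d: "d2 powr \<delta> = C/(2*K)" using C K \<delta> by (simp add: d2_def powr_powr)
  define \<epsilon> where "\<epsilon> = min 1 (min d d2)"
  show ?thesis
  proof (rule that[of \<epsilon>])
    show "0 < \<epsilon>" "\<epsilon> \<le> 1" using d d2 by (auto simp: \<epsilon>_def)
    fix x :: real assume x0: "x \<noteq> 0" and xe: "\<bar>x\<bar> < \<epsilon>"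
    define a where "a = \<bar>x\<bar>"
    have a0: "a > 0" using x0 by (simp add: a_def)
    define P where "P = a powr (-1-Y)"
    have P0: "P > 0" using a0 by (simp add: P_def)
    have e1: "C / a powr (1 + Y) = C * P"
      using powr_minus[of a "1+Y"] by (simp add: P_def divide_inverse minus_add)
    have e2: "a powr (- (1 + Y - \<delta>)) = P * a powr \<delta>"
    proof -
      have "- (1 + Y - \<delta>) = (-1-Y) + \<delta>" by simp
      then show ?thesis unfolding P_def by (metis powr_add)
    qed
    have "a powr \<delta> < d2 powr \<delta>"
      using xe a0 \<delta> by (intro powr_less_mono2) (auto simp: a_def \<epsilon>_def)
    hence Kd: "K * a powr \<delta> \<le> C/2" using K d2d by (simp add: field_simps)
    have "\<bar>f_sym f x - C * P\<bar> \<le> K * (P * a powr \<delta>)"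
      using B[OF x0] xe e1 e2 by (auto simp: a_def \<epsilon>_def)
    moreover have "K * (P * a powr \<delta>) \<le> C/2 * P"
      using mult_right_mono[OF Kd, of P] P0 by (simp add: mult_ac)
    ultimately show "C/2 * \<bar>x\<bar> powr (-1-Y) \<le> f_sym f x \<and> f_sym f x \<le> 3*C/2 * \<bar>x\<bar> powr (-1-Y)"
      unfolding P_def a_def by (auto simp: abs_le_iff)
  qed
qed

lemma far_bound:
  fixes e x fx :: real
  assumes e0: "0 < e" and e1: "e \<le> 1" and ex: "e \<le> \<bar>x\<bar>" and f0: "fx \<ge> 0"
  shows "fx \<le> min (x\<^sup>2) \<bar>x\<bar> * fx / e\<^sup>2" "\<bar>x\<bar> * fx \<le> min (x\<^sup>2) \<bar>x\<bar> * fx / e"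
proof -
  have xx: "x\<^sup>2 = \<bar>x\<bar> * \<bar>x\<bar>" by (simp add: power2_eq_square)
  have "e\<^sup>2 \<le> \<bar>x\<bar>^2" using power_mono[OF ex, of 2] e0 by simp
  hence a1: "e\<^sup>2 \<le> x\<^sup>2" by simp
  have "e * e \<le> 1 * e" using e1 e0 by (intro mult_right_mono) auto
  hence a2: "e\<^sup>2 \<le> \<bar>x\<bar>" using ex by (simp add: power2_eq_square)
  have m1: "e\<^sup>2 \<le> min (x\<^sup>2) \<bar>x\<bar>" using a1 a2 by simp
  have b1: "e * \<bar>x\<bar> \<le> x\<^sup>2" unfolding xx using ex by (intro mult_right_mono) auto
  have "e * \<bar>x\<bar> \<le> 1 * \<bar>x\<bar>" using e1 by (intro mult_right_mono) auto
  hence b2: "e * \<bar>x\<bar> \<le> \<bar>x\<bar>" by simp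
  have m2: "e * \<bar>x\<bar> \<le> min (x\<^sup>2) \<bar>x\<bar>" using b1 b2 by simp
  have "e\<^sup>2 * fx \<le> min (x\<^sup>2) \<bar>x\<bar> * fx" using m1 f0 by (intro mult_right_mono) auto
  then show "fx \<le> min (x\<^sup>2) \<bar>x\<bar> * fx / e\<^sup>2" using e0 by (simp add: pos_le_divide_eq mult_ac)
  have "e * \<bar>x\<bar> * fx \<le> min (x\<^sup>2) \<bar>x\<bar> * fx" using m2 f0 by (intro mult_right_mono) auto
  then show "\<bar>x\<bar> * fx \<le> min (x\<^sup>2) \<bar>x\<bar> * fx / e" using e0 by (simp add: pos_le_divide_eq mult_ac)
qed

lemma cosmin: fixes u x :: real shows "1 - cos (u*x) \<le> (u\<^sup>2/2 + 2) * min (x\<^sup>2) \<bar>x\<bar>"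
proof (cases "\<bar>x\<bar> \<le> 1")
  case True
  have m: "min (x\<^sup>2) \<bar>x\<bar> = x\<^sup>2"
  proof -
    have "\<bar>x\<bar> * \<bar>x\<bar> \<le> \<bar>x\<bar> * 1" using mult_left_mono[OF True, of "\<bar>x\<bar>"] by simp
    hence "x\<^sup>2 \<le> \<bar>x\<bar>" by (simp add: power2_eq_square)
    then show ?thesis by simp
  qed
  have "1 - cos (u*x) \<le> (u*x)\<^sup>2/2" by (rule one_minus_cos_le)
  also have "\<dots> = u\<^sup>2/2 * x\<^sup>2" by (simp add: power_mult_distrib)
  also have "\<dots> \<le> (u\<^sup>2/2 + 2) * x\<^sup>2" by (intro mult_right_mono) auto
  finally show ?thesis using m by simp
next
  case False
  have m: "min (x\<^sup>2) \<bar>x\<bar> = \<bar>x\<bar>"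
  proof -
    have "\<bar>x\<bar> * 1 \<le> \<bar>x\<bar> * \<bar>x\<bar>" using False by (intro mult_left_mono) auto
    hence "\<bar>x\<bar> \<le> x\<^sup>2" by (simp add: power2_eq_square)
    then show ?thesis by simp
  qed
  have "1 - cos (u*x) \<le> 2" using cos_ge_minus_one[of "u*x"] by simp
  also have "\<dots> \<le> 2 * \<bar>x\<bar>" using False by simp
  also have "\<dots> \<le> (u\<^sup>2/2 + 2) * \<bar>x\<bar>" by (intro mult_right_mono) auto
  finally show ?thesis using m by simp
qed

lemma sinmin: fixes u x :: real shows "\<bar>u*x - sin (u*x)\<bar> \<le> (\<bar>u\<bar>^3/6 + 2*\<bar>u\<bar>) * min (x\<^sup>2) \<bar>x\<bar>"
proof (cases "\<bar>x\<bar> \<le> 1")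
  case True
  have m: "min (x\<^sup>2) \<bar>x\<bar> = x\<^sup>2"
  proof -
    have "\<bar>x\<bar> * \<bar>x\<bar> \<le> \<bar>x\<bar> * 1" using mult_left_mono[OF True, of "\<bar>x\<bar>"] by simp
    hence "x\<^sup>2 \<le> \<bar>x\<bar>" by (simp add: power2_eq_square)
    then show ?thesis by simp
  qed
  have x3: "\<bar>x\<bar>^3 \<le> x\<^sup>2" using power_decreasing[of 2 3 "\<bar>x\<bar>"] True by simp
  have "\<bar>u*x - sin (u*x)\<bar> \<le> \<bar>u*x\<bar>^3/6" by (rule sin_diff_le)
  also have "\<dots> = \<bar>u\<bar>^3/6 * \<bar>x\<bar>^3" by (simp add: abs_mult power_mult_distrib)
  also have "\<dots> \<le> \<bar>u\<bar>^3/6 * x\<^sup>2" using x3 by (intro mult_left_mono) auto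
  also have "\<dots> \<le> (\<bar>u\<bar>^3/6 + 2*\<bar>u\<bar>) * x\<^sup>2" by (intro mult_right_mono) auto
  finally show ?thesis using m by simp
next
  case False
  have m: "min (x\<^sup>2) \<bar>x\<bar> = \<bar>x\<bar>"
  proof -
    have "\<bar>x\<bar> * 1 \<le> \<bar>x\<bar> * \<bar>x\<bar>" using False by (intro mult_left_mono) auto
    hence "\<bar>x\<bar> \<le> x\<^sup>2" by (simp add: power2_eq_square)
    then show ?thesis by simp
  qed
  have "\<bar>u*x - sin (u*x)\<bar> \<le> 2 * \<bar>u*x\<bar>" by (rule sin_diff_le2)
  also have "\<dots> = 2*\<bar>u\<bar> * \<bar>x\<bar>" by (simp add: abs_mult)
  also have "\<dots> \<le> (\<bar>u\<bar>^3/6 + 2*\<bar>u\<bar>) * \<bar>x\<bar>" by (intro mult_right_mono) auto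
  finally show ?thesis using m by simp
qed

lemma pw1: "0 \<le> Y \<Longrightarrow> \<bar>u::real\<bar> powr Y \<le> (1 + u\<^sup>2) powr (Y/2)"
proof -
  assume Y: "0 \<le> Y"
  have "(\<bar>u\<bar> powr 2) powr (Y/2) = \<bar>u\<bar> powr Y" by (subst powr_powr) simp
  hence "\<bar>u\<bar> powr Y = (u\<^sup>2) powr (Y/2)" using abs_powr2[of u] by metis
  also have "\<dots> \<le> (1 + u\<^sup>2) powr (Y/2)" using Y by (intro powr_mono2) auto
  finally show ?thesis .
qed

lemma pw2: "1 \<le> Y \<Longrightarrow> \<bar>u::real\<bar> \<le> (1 + u\<^sup>2) powr (Y/2)"
proof -
  assume Y: "1 \<le> Y"
  have "\<bar>u\<bar> = \<bar>u\<bar> powr 1" by (cases "u = 0") auto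
  also have "\<dots> \<le> (1 + u\<^sup>2) powr (1/2)" using pw1[of 1 u] by simp
  also have "\<dots> \<le> (1 + u\<^sup>2) powr (Y/2)" using Y by (intro powr_mono) auto
  finally show ?thesis .
qed

lemma pw3: "0 \<le> Y \<Longrightarrow> 1 \<le> (1 + (u::real)\<^sup>2) powr (Y/2)"
  by (intro ge_one_powr_ge_zero) auto



theorem mainTheorem7:
  fixes f :: "real \<Rightarrow> real" and b Y C \<delta> :: real
  assumes f_nonneg: "\<And>x. f x \<ge> 0"
    and f_meas: "f \<in> borel_measurable borel"
    and special_levy: "integrable lborel (\<lambda>x. min (x\<^sup>2) \<bar>x\<bar> * f x)"
    and C_pos: "C > 0" and delta_pos: "\<delta> > 0"
    and g_bound: "(\<lambda>x. f_sym f x - C / \<bar>x\<bar> powr (1 + Y))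
                    \<in> O[at 0](\<lambda>x. \<bar>x\<bar> powr (- (1 + Y - \<delta>)))"
    and cases:
      "(0 < Y \<and> Y < 1 \<and>
          (\<exists>\<alpha>. \<alpha> \<le> 1 + Y \<and> f_asym f \<in> O[at 0](\<lambda>x. \<bar>x\<bar> powr (- \<alpha>))) \<and>
          integrable lborel (\<lambda>x. x * f_asym f x) \<and>
          b = (\<integral>x. x * f x \<partial>lborel))
     \<or> (Y = 1 \<and> (\<exists>\<alpha>. \<alpha> < 2 \<and> f_asym f \<in> O[at 0](\<lambda>x. \<bar>x\<bar> powr (- \<alpha>))))
     \<or> (1 < Y \<and> Y < 2)"
  shows "has_sobolev_index (levy_symbol b f) Y"
proof -
  note f_meas[measurable]
  have Y0: "0 < Y" and Y2: "Y < 2" using cases by auto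
  obtain \<epsilon> where e0: "0 < \<epsilon>" and e1: "\<epsilon> \<le> 1" and fsb: "\<And>x. x \<noteq> 0 \<Longrightarrow> \<bar>x\<bar> < \<epsilon> \<Longrightarrow>
      C/2 * \<bar>x\<bar> powr (-1-Y) \<le> f_sym f x \<and> f_sym f x \<le> 3*C/2 * \<bar>x\<bar> powr (-1-Y)"
    using eps_sym[OF g_bound C_pos delta_pos] by blast
  have fs0: "f_sym f x \<ge> 0" for x using f_nonneg[of x] f_nonneg[of "-x"] by (simp add: f_sym_def)
  have fnear: "f x \<le> 3*C * \<bar>x\<bar> powr (-1-Y)" if "x \<noteq> 0" "\<bar>x\<bar> < \<epsilon>" for x
    using fsb[OF that] f_nonneg[of "-x"] by (simp add: f_sym_def)
  have fas_le: "\<bar>f_asym f x\<bar> \<le> (f x + f (-x)) / 2" for x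
    using f_nonneg[of x] f_nonneg[of "-x"] by (simp add: f_asym_def)
  define M where "M = (\<lambda>x. min (x\<^sup>2) \<bar>x\<bar> * f x)"
  have Mint: "integrable lborel M" using special_levy by (simp add: M_def)
  have M0: "M x \<ge> 0" for x using f_nonneg[of x] by (simp add: M_def)
  have M_meas[measurable]: "M \<in> borel_measurable borel" unfolding M_def by measurable
  define Mi where "Mi = (\<integral>x. M x \<partial>lborel)"
  have Mi0: "Mi \<ge> 0" unfolding Mi_def using M0 by simp
  have Mneg: "integrable lborel (\<lambda>x. M (-x))" "(\<integral>x. M (-x) \<partial>lborel) = Mi"
    using reflect[OF Mint] by (auto simp: Mi_def)
  have Mneg_eq: "M (-x) = min (x\<^sup>2) \<bar>x\<bar> * f (-x)" for x by (simp add: M_def)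
  have farx: "f x \<le> M x / e\<^sup>2" "\<bar>x\<bar> * f x \<le> M x / e"
    "f (-x) \<le> M (-x) / e\<^sup>2" "\<bar>x\<bar> * f (-x) \<le> M (-x) / e"
    if "0 < e" "e \<le> 1" "e \<le> \<bar>x\<bar>" for e x
    using far_bound[OF that f_nonneg[of x]] far_bound[OF that f_nonneg[of "-x"]]
    by (simp_all add: M_def)

  have Rint: "integrable lborel (\<lambda>x. (1 - cos (u*x)) * f x)" for u
  proof (rule Bochner_Integration.integrable_bound)
    show "integrable lborel (\<lambda>x. (u\<^sup>2/2+2) * M x)" using Mint by simp
    show "(\<lambda>x. (1 - cos (u*x)) * f x) \<in> borel_measurable lborel" by measurable
    show "AE x in lborel. norm ((1 - cos (u*x)) * f x) \<le> norm ((u\<^sup>2/2+2) * M x)"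
    proof (rule AE_I2)
      fix x
      have "0 \<le> (1 - cos (u*x)) * f x" using f_nonneg[of x] cos_le_one[of "u*x"] by simp
      moreover have "(1 - cos (u*x)) * f x \<le> (u\<^sup>2/2+2) * M x"
        using mult_right_mono[OF cosmin[of u x] f_nonneg[of x]] by (simp add: M_def mult_ac)
      moreover have "0 \<le> (u\<^sup>2/2+2) * M x" using M0[of x] by simp
      ultimately show "norm ((1 - cos (u*x)) * f x) \<le> norm ((u\<^sup>2/2+2) * M x)" by simp
    qed
  qed
  have Iint: "integrable lborel (\<lambda>x. (u*x - sin (u*x)) * f x)" for u
  proof (rule Bochner_Integration.integrable_bound)
    show "integrable lborel (\<lambda>x. (\<bar>u\<bar>^3/6 + 2*\<bar>u\<bar>) * M x)" using Mint by simp
    show "(\<lambda>x. (u*x - sin (u*x)) * f x) \<in> borel_measurable lborel" by measurable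
    show "AE x in lborel. norm ((u*x - sin (u*x)) * f x) \<le> norm ((\<bar>u\<bar>^3/6 + 2*\<bar>u\<bar>) * M x)"
    proof (rule AE_I2)
      fix x
      have "\<bar>u*x - sin (u*x)\<bar> * f x \<le> (\<bar>u\<bar>^3/6 + 2*\<bar>u\<bar>) * M x"
        using mult_right_mono[OF sinmin[of u x] f_nonneg[of x]] by (simp add: M_def mult_ac)
      moreover have "0 \<le> (\<bar>u\<bar>^3/6 + 2*\<bar>u\<bar>) * M x" using M0[of x] by simp
      ultimately show "norm ((u*x - sin (u*x)) * f x) \<le> norm ((\<bar>u\<bar>^3/6 + 2*\<bar>u\<bar>) * M x)"
        using f_nonneg[of x] M0[of x] by (simp add: abs_mult)
    qed
  qed
  let ?A = "levy_symbol b f"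
  have ReA: "Re (?A u) = (\<integral>x. (1 - cos (u*x)) * f x \<partial>lborel)" for u
    using symbol_decomp[OF Rint Iint] by simp
  have ImA: "Im (?A u) = u * b - (\<integral>x. (u*x - sin (u*x)) * f x \<partial>lborel)" for u
    using symbol_decomp[OF Rint Iint] by simp
  have Re0: "Re (?A u) \<ge> 0" for u
    unfolding ReA using f_nonneg cos_le_one by simp

  define K1v where "K1v = (\<integral>t. (1 - cos t) * \<bar>t\<bar> powr (-1-Y) \<partial>lborel)"
  have K1i: "integrable lborel (\<lambda>t. (1 - cos t) * \<bar>t\<bar> powr (-1-Y))" by (rule K1) (use Y0 Y2 in auto)
  have K1v0: "K1v \<ge> 0" unfolding K1v_def using cos_le_one by simp
  have sc1: "integrable lborel (\<lambda>x. (1 - cos (u*x)) * \<bar>x\<bar> powr (-1-Y)) \<and>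
     (\<integral>x. (1 - cos (u*x)) * \<bar>x\<bar> powr (-1-Y) \<partial>lborel) = \<bar>u\<bar> powr Y * K1v" for u
    using scaling[of "\<lambda>t. 1 - cos t" Y u] K1i by (simp add: K1v_def)
  have Reup: "Re (?A u) \<le> 3*C*(\<bar>u\<bar> powr Y * K1v) + 2/\<epsilon>\<^sup>2 * Mi" for u
  proof -
    have "(\<integral>x. (1 - cos (u*x)) * f x \<partial>lborel) \<le>
      (\<integral>x. 3*C*((1 - cos (u*x)) * \<bar>x\<bar> powr (-1-Y)) + 2/\<epsilon>\<^sup>2 * M x \<partial>lborel)"
    proof (rule Bochner_Integration.integral_mono)
      show "integrable lborel (\<lambda>x. (1 - cos (u*x)) * f x)" by (rule Rint)
      show "integrable lborel (\<lambda>x. 3*C*((1 - cos (u*x)) * \<bar>x\<bar> powr (-1-Y)) + 2/\<epsilon>\<^sup>2 * M x)"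
        using sc1[of u] Mint by simp
      fix x :: real
      have c0: "0 \<le> 1 - cos (u*x)" using cos_le_one by simp
      have T1: "0 \<le> 3*C*((1 - cos (u*x)) * \<bar>x\<bar> powr (-1-Y))" using c0 C_pos by simp
      have T2: "0 \<le> 2/\<epsilon>\<^sup>2 * M x" using M0[of x] by simp
      consider "x = 0" | "x \<noteq> 0" "\<bar>x\<bar> < \<epsilon>" | "\<epsilon> \<le> \<bar>x\<bar>" by force
      then show "(1 - cos (u*x)) * f x \<le> 3*C*((1 - cos (u*x)) * \<bar>x\<bar> powr (-1-Y)) + 2/\<epsilon>\<^sup>2 * M x"
      proof cases
        case 1 then show ?thesis using T1 T2 by simp
      next
        case 2
        have "(1 - cos (u*x)) * f x \<le> (1 - cos (u*x)) * (3*C * \<bar>x\<bar> powr (-1-Y))"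
          using mult_left_mono[OF fnear[OF 2] c0] .
        then show ?thesis using T2 by (simp add: mult_ac)
      next
        case 3
        have "(1 - cos (u*x)) * f x \<le> 2 * f x"
          using mult_right_mono[OF _ f_nonneg[of x], of "1 - cos (u*x)" 2] cos_ge_minus_one[of "u*x"] by simp
        also have "\<dots> \<le> 2 * (M x / \<epsilon>\<^sup>2)" using farx(1)[OF e0 e1 3] by simp
        finally show ?thesis using T1 by simp
      qed
    qed
    also have "\<dots> = 3*C*(\<bar>u\<bar> powr Y * K1v) + 2/\<epsilon>\<^sup>2 * Mi"
      by (subst Bochner_Integration.integral_add) (use sc1[of u] Mint in \<open>auto simp: Mi_def\<close>)
    finally show ?thesis unfolding ReA .
  qed

  define c0 where "c0 = 1 - cos (1/2::real)"
  have c0pos: "c0 > 0"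
  proof -
    have "cos (1/2::real) < cos 0" using pi_gt3 by (intro cos_monotone_0_pi) auto
    then show ?thesis by (simp add: c0_def)
  qed
  have Relow: "c0*C/4 * \<bar>u\<bar> powr Y \<le> Re (?A u)" if u: "1/\<epsilon> < \<bar>u\<bar>" for u
  proof -
    have "0 < 1/\<epsilon>" using e0 by simp
    hence u0: "\<bar>u\<bar> > 0" using u by linarith
    have "1 < \<epsilon> * \<bar>u\<bar>" using u e0 by (simp add: divide_less_eq mult.commute)
    hence ue: "1/\<bar>u\<bar> < \<epsilon>" using u0 by (simp add: divide_less_eq mult.commute)
    have ev: "integrable lborel (\<lambda>x. (1 - cos (u*x)) * f_sym f x) \<and>
      (\<integral>x. (1 - cos (u*x)) * f_sym f x \<partial>lborel) = (\<integral>x. (1 - cos (u*x)) * f x \<partial>lborel)"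
      by (rule even_sym[where h="\<lambda>x. 1 - cos (u*x)", OF Rint[of u]]) simp
    define v where "v = c0*C/2 * \<bar>u\<bar> powr (1+Y)"
    define S where "S = {1/(2*\<bar>u\<bar>)..1/\<bar>u\<bar>}"
    have "(\<integral>x. v * indicator S x \<partial>lborel) \<le> (\<integral>x. (1 - cos (u*x)) * f_sym f x \<partial>lborel)"
    proof (rule Bochner_Integration.integral_mono)
      show "integrable lborel (\<lambda>x. v * indicator S x)" unfolding S_def
        by (intro Bochner_Integration.integrable_mult_right integrable_real_indicator) (auto simp: emeasure_lborel_Icc_eq)
      show "integrable lborel (\<lambda>x. (1 - cos (u*x)) * f_sym f x)" using ev by simp
      fix x :: real
      have cc: "0 \<le> 1 - cos (u*x)" using cos_le_one by simp
      show "v * indicator S x \<le> (1 - cos (u*x)) * f_sym f x"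
      proof (cases "x \<in> S")
        case False then show ?thesis using cc fs0[of x] by simp
      next
        case True
        have xl: "1/(2*\<bar>u\<bar>) \<le> x" and xu: "x \<le> 1/\<bar>u\<bar>" using True by (auto simp: S_def)
        have xpos: "0 < x" using xl u0 by (smt (verit) divide_pos_pos)
        have xe: "\<bar>x\<bar> < \<epsilon>" using xpos xu ue by simp
        have f1: "C/2 * \<bar>u\<bar> powr (1+Y) \<le> f_sym f x"
        proof -
          have "(1/\<bar>u\<bar>) powr (-1-Y) \<le> x powr (-1-Y)" by (rule powr_mono2') (use xpos xu Y0 in auto)
          moreover have "(1/\<bar>u\<bar>) powr (-1-Y) = \<bar>u\<bar> powr (1+Y)"
          proof -
            have e: "\<bar>u\<bar> powr (-1-Y) = inverse (\<bar>u\<bar> powr (1+Y))"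
              using powr_minus[of "\<bar>u\<bar>" "1+Y"] by (simp add: minus_add)
            have a: "(1/\<bar>u\<bar>) powr (-1-Y) = 1 powr (-1-Y) / \<bar>u\<bar> powr (-1-Y)" by (rule powr_divide; simp)
            show ?thesis unfolding a e by (simp only: powr_one_eq_one divide_inverse inverse_inverse_eq mult_1_left)
          qed
          ultimately have "C/2 * \<bar>u\<bar> powr (1+Y) \<le> C/2 * x powr (-1-Y)" using C_pos by simp
          also have "\<dots> \<le> f_sym f x" using fsb[of x] xpos xe by simp
          finally show ?thesis .
        qed
        have c1: "c0 \<le> 1 - cos (u*x)"
        proof -
          have "\<bar>u\<bar> * (1/(2*\<bar>u\<bar>)) \<le> \<bar>u\<bar> * x" using xl by (intro mult_left_mono) auto
          hence l: "1/2 \<le> \<bar>u*x\<bar>" using u0 xpos by (simp add: abs_mult)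
          have "\<bar>u\<bar> * x \<le> \<bar>u\<bar> * (1/\<bar>u\<bar>)" using xu by (intro mult_left_mono) auto
          hence r: "\<bar>u*x\<bar> \<le> 1" using u0 xpos by (simp add: abs_mult)
          have "cos \<bar>u*x\<bar> \<le> cos (1/2)" using l r pi_gt3 by (intro cos_monotone_0_pi_le) auto
          then show ?thesis by (simp add: c0_def)
        qed
        have "c0 * (C/2 * \<bar>u\<bar> powr (1+Y)) \<le> (1 - cos (u*x)) * f_sym f x"
          by (rule mult_mono[OF c1 f1 cc]) (use C_pos in simp)
        then show ?thesis using True by (simp add: v_def mult_ac)
      qed
    qed
    also have "\<dots> = Re (?A u)" using ev ReA by simp
    finally have L: "(\<integral>x. v * indicator S x \<partial>lborel) \<le> Re (?A u)" .
    have le: "1/(2*\<bar>u\<bar>) \<le> 1/\<bar>u\<bar>" using u0 by (simp add: field_simps)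
    have "(\<integral>x. v * indicator S x \<partial>lborel) = v * (1/\<bar>u\<bar> - 1/(2*\<bar>u\<bar>))"
      using le by (simp add: S_def measure_def)
    also have "\<dots> = c0*C/4 * \<bar>u\<bar> powr Y"
    proof -
      have "\<bar>u\<bar> powr (1+Y) = \<bar>u\<bar> * \<bar>u\<bar> powr Y" using u0 by (simp add: powr_add)
      then show ?thesis using u0 by (simp add: v_def field_simps)
    qed
    finally show ?thesis using L by simp
  qed

  have Imc: "\<exists>P\<ge>0. \<forall>u. \<bar>Im (?A u)\<bar> \<le> P * (1 + u\<^sup>2) powr (Y/2)" if Yc: "1 < Y" "Y < 2"
  proof -
    define K2v where "K2v = (\<integral>t. \<bar>t - sin t\<bar> * \<bar>t\<bar> powr (-1-Y) \<partial>lborel)"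
    have K2i: "integrable lborel (\<lambda>t. \<bar>t - sin t\<bar> * \<bar>t\<bar> powr (-1-Y))" by (rule K2) (use Yc in auto)
    have K2v0: "K2v \<ge> 0" unfolding K2v_def by simp
    have sc2: "integrable lborel (\<lambda>x. \<bar>u*x - sin (u*x)\<bar> * \<bar>x\<bar> powr (-1-Y)) \<and>
       (\<integral>x. \<bar>u*x - sin (u*x)\<bar> * \<bar>x\<bar> powr (-1-Y) \<partial>lborel) = \<bar>u\<bar> powr Y * K2v" for u
      using scaling[of "\<lambda>t. \<bar>t - sin t\<bar>" Y u] K2i by (simp add: K2v_def)
    define P where "P = \<bar>b\<bar> + 3*C*K2v + 2*Mi/\<epsilon>"
    show ?thesis
    proof (intro exI[of _ P] conjI allI)
      show "P \<ge> 0" using K2v0 Mi0 C_pos e0 by (simp add: P_def)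
      fix u :: real
      define W where "W = (1 + u\<^sup>2) powr (Y/2)"
      have W1: "\<bar>u\<bar> \<le> W" unfolding W_def by (rule pw2) (use Yc in simp)
      have W2: "\<bar>u\<bar> powr Y \<le> W" unfolding W_def by (rule pw1) (use Yc in simp)
      have "norm (\<integral>x. (u*x - sin (u*x)) * f x \<partial>lborel) \<le>
        (\<integral>x. 3*C*(\<bar>u*x - sin (u*x)\<bar> * \<bar>x\<bar> powr (-1-Y)) + 2*\<bar>u\<bar>/\<epsilon> * M x \<partial>lborel)"
      proof (rule Bochner_Integration.integral_norm_bound_integral)
        show "integrable lborel (\<lambda>x. (u*x - sin (u*x)) * f x)" by (rule Iint)
        show "integrable lborel (\<lambda>x. 3*C*(\<bar>u*x - sin (u*x)\<bar> * \<bar>x\<bar> powr (-1-Y)) + 2*\<bar>u\<bar>/\<epsilon> * M x)"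
          using sc2[of u] Mint by simp
        fix x :: real
        have hx: "norm ((u*x - sin (u*x)) * f x) = \<bar>u*x - sin (u*x)\<bar> * f x"
          using f_nonneg[of x] by (simp add: abs_mult)
        have T1: "0 \<le> 3*C*(\<bar>u*x - sin (u*x)\<bar> * \<bar>x\<bar> powr (-1-Y))" using C_pos by simp
        have T2: "0 \<le> 2*\<bar>u\<bar>/\<epsilon> * M x" using M0[of x] e0 by simp
        consider "x = 0" | "x \<noteq> 0" "\<bar>x\<bar> < \<epsilon>" | "\<epsilon> \<le> \<bar>x\<bar>" by force
        then show "norm ((u*x - sin (u*x)) * f x) \<le> 3*C*(\<bar>u*x - sin (u*x)\<bar> * \<bar>x\<bar> powr (-1-Y)) + 2*\<bar>u\<bar>/\<epsilon> * M x"
        proof cases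
          case 1 then show ?thesis using T1 T2 by simp
        next
          case 2
          have "\<bar>u*x - sin (u*x)\<bar> * f x \<le> \<bar>u*x - sin (u*x)\<bar> * (3*C * \<bar>x\<bar> powr (-1-Y))"
            by (rule mult_left_mono[OF fnear[OF 2]]) simp
          then show ?thesis using T2 hx by (simp add: mult_ac)
        next
          case 3
          have "\<bar>u*x - sin (u*x)\<bar> * f x \<le> (2*\<bar>u\<bar>*\<bar>x\<bar>) * f x"
            using mult_right_mono[OF sin_diff_le2[of "u*x"] f_nonneg[of x]] by (simp add: abs_mult)
          also have "\<dots> = 2*\<bar>u\<bar> * (\<bar>x\<bar> * f x)" by simp
          also have "\<dots> \<le> 2*\<bar>u\<bar> * (M x / \<epsilon>)"
            by (rule mult_left_mono[OF farx(2)[OF e0 e1 3]]) simp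
          also have "\<dots> = 2*\<bar>u\<bar>/\<epsilon> * M x" by simp
          finally show ?thesis using T1 hx by linarith
        qed
      qed
      also have "\<dots> = 3*C*(\<bar>u\<bar> powr Y * K2v) + 2*\<bar>u\<bar>/\<epsilon> * Mi"
        by (subst Bochner_Integration.integral_add) (use sc2[of u] Mint in \<open>auto simp: Mi_def\<close>)
      finally have B: "\<bar>\<integral>x. (u*x - sin (u*x)) * f x \<partial>lborel\<bar> \<le> 3*C*(\<bar>u\<bar> powr Y * K2v) + 2*\<bar>u\<bar>/\<epsilon> * Mi"
        by simp
      have "\<bar>Im (?A u)\<bar> \<le> \<bar>u\<bar> * \<bar>b\<bar> + (3*C*(\<bar>u\<bar> powr Y * K2v) + 2*\<bar>u\<bar>/\<epsilon> * Mi)"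
        unfolding ImA using B abs_triangle_ineq4[of "u*b" "\<integral>x. (u*x - sin (u*x)) * f x \<partial>lborel"]
          abs_mult[of u b] by linarith
      also have "\<dots> \<le> W * \<bar>b\<bar> + (3*C*(W * K2v) + 2*W/\<epsilon> * Mi)"
      proof -
        have "\<bar>u\<bar> * \<bar>b\<bar> \<le> W * \<bar>b\<bar>" using W1 by (intro mult_right_mono) auto
        moreover have "\<bar>u\<bar> powr Y * K2v \<le> W * K2v" using W2 K2v0 by (intro mult_right_mono) auto
        hence "3*C*(\<bar>u\<bar> powr Y * K2v) \<le> 3*C*(W * K2v)" using C_pos by (intro mult_left_mono) auto
        moreover have "2*\<bar>u\<bar>/\<epsilon> * Mi \<le> 2*W/\<epsilon> * Mi" using W1 Mi0 e0
          by (intro mult_right_mono divide_right_mono) auto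
        ultimately show ?thesis by linarith
      qed
      also have "\<dots> = P * W" by (simp add: P_def algebra_simps)
      finally show "\<bar>Im (?A u)\<bar> \<le> P * (1 + u\<^sup>2) powr (Y/2)" by (simp add: W_def)
    qed
  qed

  have Imb: "\<exists>P\<ge>0. \<forall>u. \<bar>Im (?A u)\<bar> \<le> P * (1 + u\<^sup>2) powr (Y/2)"
    if Yb: "Y = 1" and al: "\<alpha> < 2" and fab: "f_asym f \<in> O[at 0](\<lambda>x. \<bar>x\<bar> powr (- \<alpha>))" for \<alpha>
  proof -
    obtain Kb db where Kb: "Kb > 0" and db: "db > 0" and
      Bb: "\<And>x. x \<noteq> 0 \<Longrightarrow> \<bar>x\<bar> < db \<Longrightarrow> \<bar>f_asym f x\<bar> \<le> Kb * \<bar>x\<bar> powr (- \<alpha>)"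
      using bigO_at0[OF fab] by blast
    define e2 where "e2 = min 1 db"
    have e20: "0 < e2" and e21: "e2 \<le> 1" using db by (auto simp: e2_def)
    have P0i: "integrable lborel (\<lambda>x. indicator {-e2..e2} x * \<bar>x\<bar> powr (1-\<alpha>) :: real)"
      by (rule pow_int0) (use al e20 in auto)
    define Pint where "Pint = (\<integral>x. indicator {-e2..e2} x * \<bar>x\<bar> powr (1-\<alpha>) \<partial>lborel :: real)"
    have Pint0: "Pint \<ge> 0" unfolding Pint_def by simp
    define P where "P = \<bar>b\<bar> + 2*Kb*Pint + 2*Mi/e2"
    show ?thesis
    proof (intro exI[of _ P] conjI allI)
      show "P \<ge> 0" using Kb Pint0 Mi0 e20 by (simp add: P_def)
      fix u :: real
      define W where "W = (1 + u\<^sup>2) powr (Y/2)"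
      have W1: "\<bar>u\<bar> \<le> W" unfolding W_def by (rule pw2) (use Yb in simp)
      have od: "integrable lborel (\<lambda>x. (u*x - sin (u*x)) * f_asym f x) \<and>
        (\<integral>x. (u*x - sin (u*x)) * f_asym f x \<partial>lborel) = (\<integral>x. (u*x - sin (u*x)) * f x \<partial>lborel)"
        by (rule odd_sym[where h="\<lambda>x. u*x - sin (u*x)", OF Iint[of u]]) simp
      have "norm (\<integral>x. (u*x - sin (u*x)) * f_asym f x \<partial>lborel) \<le>
        (\<integral>x. 2*\<bar>u\<bar>*Kb * (indicator {-e2..e2} x * \<bar>x\<bar> powr (1-\<alpha>)) + \<bar>u\<bar>/e2 * (M x + M (-x)) \<partial>lborel)"
      proof (rule Bochner_Integration.integral_norm_bound_integral)
        show "integrable lborel (\<lambda>x. (u*x - sin (u*x)) * f_asym f x)" using od by simp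
        show "integrable lborel (\<lambda>x. 2*\<bar>u\<bar>*Kb * (indicator {-e2..e2} x * \<bar>x\<bar> powr (1-\<alpha>)) + \<bar>u\<bar>/e2 * (M x + M (-x)))"
          using P0i Mint Mneg by simp
        fix x :: real
        have T1: "0 \<le> 2*\<bar>u\<bar>*Kb * (indicator {-e2..e2} x * \<bar>x\<bar> powr (1-\<alpha>))" using Kb by simp
        have T2: "0 \<le> \<bar>u\<bar>/e2 * (M x + M (-x))" using M0[of x] M0[of "-x"] e20 by simp
        have hx: "norm ((u*x - sin (u*x)) * f_asym f x) = \<bar>u*x - sin (u*x)\<bar> * \<bar>f_asym f x\<bar>"
          by (simp add: abs_mult)
        have h2: "\<bar>u*x - sin (u*x)\<bar> \<le> 2*\<bar>u\<bar>*\<bar>x\<bar>" using sin_diff_le2[of "u*x"] by (simp add: abs_mult)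
        consider "x = 0" | "x \<noteq> 0" "\<bar>x\<bar> < e2" | "e2 \<le> \<bar>x\<bar>" by force
        then show "norm ((u*x - sin (u*x)) * f_asym f x) \<le> 2*\<bar>u\<bar>*Kb * (indicator {-e2..e2} x * \<bar>x\<bar> powr (1-\<alpha>)) + \<bar>u\<bar>/e2 * (M x + M (-x))"
        proof cases
          case 1 then show ?thesis using T1 T2 by simp
        next
          case 2
          have xd: "\<bar>x\<bar> < db" using 2 by (simp add: e2_def)
          have ind: "indicator {-e2..e2} x = (1::real)" using 2 by (simp add: indicator_def abs_le_iff less_imp_le)
          have pw: "\<bar>x\<bar> * \<bar>x\<bar> powr (- \<alpha>) = \<bar>x\<bar> powr (1-\<alpha>)"
          proof -
            have "\<bar>x\<bar> powr (1 + (-\<alpha>)) = \<bar>x\<bar> powr 1 * \<bar>x\<bar> powr (-\<alpha>)" by (rule powr_add)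
            then show ?thesis using 2 by simp
          qed
          have "\<bar>u*x - sin (u*x)\<bar> * \<bar>f_asym f x\<bar> \<le> (2*\<bar>u\<bar>*\<bar>x\<bar>) * (Kb * \<bar>x\<bar> powr (- \<alpha>))"
            by (rule mult_mono[OF h2 Bb[OF 2(1) xd]]) auto
          also have "\<dots> = 2*\<bar>u\<bar>*Kb * (\<bar>x\<bar> * \<bar>x\<bar> powr (- \<alpha>))" by simp
          also have "\<dots> = 2*\<bar>u\<bar>*Kb * (indicator {-e2..e2} x * \<bar>x\<bar> powr (1-\<alpha>))" using ind pw by simp
          finally show ?thesis using T2 hx by linarith
        next
          case 3
          have "\<bar>u*x - sin (u*x)\<bar> * \<bar>f_asym f x\<bar> \<le> (2*\<bar>u\<bar>*\<bar>x\<bar>) * ((f x + f (-x)) / 2)"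
            by (rule mult_mono[OF h2 fas_le]) auto
          also have "\<dots> = \<bar>u\<bar> * (\<bar>x\<bar> * f x + \<bar>x\<bar> * f (-x))" by (simp add: algebra_simps)
          also have "\<dots> \<le> \<bar>u\<bar> * (M x / e2 + M (-x) / e2)"
            using farx(2,4)[OF e20 e21 3] by (intro mult_left_mono) auto
          also have "\<dots> = \<bar>u\<bar>/e2 * (M x + M (-x))" by (simp add: add_divide_distrib algebra_simps)
          finally show ?thesis using T1 hx by linarith
        qed
      qed
      also have "\<dots> = 2*\<bar>u\<bar>*Kb * Pint + \<bar>u\<bar>/e2 * (Mi + Mi)"
        using P0i Mint Mneg by (simp add: Bochner_Integration.integral_add Pint_def Mi_def)
      finally have B: "\<bar>\<integral>x. (u*x - sin (u*x)) * f x \<partial>lborel\<bar> \<le> 2*\<bar>u\<bar>*Kb * Pint + \<bar>u\<bar>/e2 * (Mi + Mi)"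
        using od by simp
      have "\<bar>Im (?A u)\<bar> \<le> \<bar>u\<bar> * \<bar>b\<bar> + (2*\<bar>u\<bar>*Kb * Pint + \<bar>u\<bar>/e2 * (Mi + Mi))"
        unfolding ImA using B abs_triangle_ineq4[of "u*b" "\<integral>x. (u*x - sin (u*x)) * f x \<partial>lborel"]
          abs_mult[of u b] by linarith
      also have "\<dots> = \<bar>u\<bar> * P" by (simp add: P_def algebra_simps)
      also have "\<dots> \<le> W * P" using W1 Kb Pint0 Mi0 e20 by (intro mult_right_mono) (auto simp: P_def)
      finally show "\<bar>Im (?A u)\<bar> \<le> P * (1 + u\<^sup>2) powr (Y/2)" by (simp add: W_def mult.commute)
    qed
  qed

  have Ima: "\<exists>P\<ge>0. \<forall>u. \<bar>Im (?A u)\<bar> \<le> P * (1 + u\<^sup>2) powr (Y/2)"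
    if Ya: "0 < Y" "Y < 1" and al: "\<alpha> \<le> 1 + Y" and faa: "f_asym f \<in> O[at 0](\<lambda>x. \<bar>x\<bar> powr (- \<alpha>))"
      and bdef: "b = (\<integral>x. x * f x \<partial>lborel)" for \<alpha>
  proof -
    obtain Ka da where Ka: "Ka > 0" and da: "da > 0" and
      Ba: "\<And>x. x \<noteq> 0 \<Longrightarrow> \<bar>x\<bar> < da \<Longrightarrow> \<bar>f_asym f x\<bar> \<le> Ka * \<bar>x\<bar> powr (- \<alpha>)"
      using bigO_at0[OF faa] by blast
    define e2 where "e2 = min 1 da"
    have e20: "0 < e2" and e21: "e2 \<le> 1" using da by (auto simp: e2_def)
    have Q0i: "integrable lborel (\<lambda>x. indicator {-\<epsilon>..\<epsilon>} x * \<bar>x\<bar> powr (-Y) :: real)"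
      by (rule pow_int0) (use Ya e0 in auto)
    have xfi: "integrable lborel (\<lambda>x. x * f x)"
    proof (rule Bochner_Integration.integrable_bound)
      show "integrable lborel (\<lambda>x. 3*C * (indicator {-\<epsilon>..\<epsilon>} x * \<bar>x\<bar> powr (-Y)) + M x / \<epsilon>)"
        using Q0i Mint by simp
      show "(\<lambda>x. x * f x) \<in> borel_measurable lborel" by measurable
      show "AE x in lborel. norm (x * f x) \<le> norm (3*C * (indicator {-\<epsilon>..\<epsilon>} x * \<bar>x\<bar> powr (-Y)) + M x / \<epsilon>)"
      proof (rule AE_I2)
        fix x :: real
        have T1: "0 \<le> 3*C * (indicator {-\<epsilon>..\<epsilon>} x * \<bar>x\<bar> powr (-Y))" using C_pos by simp
        have T2: "0 \<le> M x / \<epsilon>" using M0[of x] e0 by simp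
        have hx: "norm (x * f x) = \<bar>x\<bar> * f x" using f_nonneg[of x] by (simp add: abs_mult)
        have "\<bar>x\<bar> * f x \<le> 3*C * (indicator {-\<epsilon>..\<epsilon>} x * \<bar>x\<bar> powr (-Y)) + M x / \<epsilon>"
        proof -
          consider "x = 0" | "x \<noteq> 0" "\<bar>x\<bar> < \<epsilon>" | "\<epsilon> \<le> \<bar>x\<bar>" by force
          then show ?thesis
          proof cases
            case 1 then show ?thesis using T1 T2 by simp
          next
            case 2
            have ind: "indicator {-\<epsilon>..\<epsilon>} x = (1::real)" using 2 by (simp add: indicator_def abs_le_iff less_imp_le)
            have pw: "\<bar>x\<bar> * \<bar>x\<bar> powr (-1-Y) = \<bar>x\<bar> powr (-Y)"
            proof -
              have "\<bar>x\<bar> powr (1 + (-1-Y)) = \<bar>x\<bar> powr 1 * \<bar>x\<bar> powr (-1-Y)" by (rule powr_add)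
              then show ?thesis using 2 by simp
            qed
            have "\<bar>x\<bar> * f x \<le> \<bar>x\<bar> * (3*C * \<bar>x\<bar> powr (-1-Y))"
              by (rule mult_left_mono[OF fnear[OF 2]]) simp
            also have "\<dots> = 3*C * (indicator {-\<epsilon>..\<epsilon>} x * \<bar>x\<bar> powr (-Y))"
              using ind pw by (simp add: mult_ac)
            finally show ?thesis using T2 by linarith
          next
            case 3
            show ?thesis using farx(2)[OF e0 e1 3] T1 by linarith
          qed
        qed
        then show "norm (x * f x) \<le> norm (3*C * (indicator {-\<epsilon>..\<epsilon>} x * \<bar>x\<bar> powr (-Y)) + M x / \<epsilon>)"
          using hx T1 T2 by simp
      qed
    qed
    define K3v where "K3v = (\<integral>t. \<bar>sin t\<bar> * \<bar>t\<bar> powr (-1-Y) \<partial>lborel)"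
    have K3i: "integrable lborel (\<lambda>t. \<bar>sin t\<bar> * \<bar>t\<bar> powr (-1-Y))" by (rule K3) (use Ya in auto)
    have K3v0: "K3v \<ge> 0" unfolding K3v_def by simp
    have sc3: "integrable lborel (\<lambda>x. \<bar>sin (u*x)\<bar> * \<bar>x\<bar> powr (-1-Y)) \<and>
       (\<integral>x. \<bar>sin (u*x)\<bar> * \<bar>x\<bar> powr (-1-Y) \<partial>lborel) = \<bar>u\<bar> powr Y * K3v" for u
      using scaling[of "\<lambda>t. \<bar>sin t\<bar>" Y u] K3i by (simp add: K3v_def)
    define P where "P = Ka * K3v + 2*Mi/e2\<^sup>2"
    show ?thesis
    proof (intro exI[of _ P] conjI allI)
      show "P \<ge> 0" using Ka K3v0 Mi0 e20 by (simp add: P_def)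
      fix u :: real
      define W where "W = (1 + u\<^sup>2) powr (Y/2)"
      have W2: "\<bar>u\<bar> powr Y \<le> W" unfolding W_def by (rule pw1) (use Ya in simp)
      have W3: "1 \<le> W" unfolding W_def by (rule pw3) (use Ya in simp)
      have seq: "(\<lambda>x. sin (u*x) * f x) = (\<lambda>x. u * (x * f x) - (u*x - sin (u*x)) * f x)"
        by (auto simp: algebra_simps)
      have sfi: "integrable lborel (\<lambda>x. sin (u*x) * f x)"
        unfolding seq using xfi Iint[of u] by simp
      have "(\<integral>x. (u*x - sin (u*x)) * f x \<partial>lborel) = (\<integral>x. u * (x * f x) - sin (u*x) * f x \<partial>lborel)"
        by (simp add: algebra_simps)
      also have "\<dots> = u * b - (\<integral>x. sin (u*x) * f x \<partial>lborel)"
        using xfi sfi bdef by (simp add: Bochner_Integration.integral_diff)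
      finally have ImS: "Im (?A u) = (\<integral>x. sin (u*x) * f x \<partial>lborel)" unfolding ImA by simp
      have od: "integrable lborel (\<lambda>x. sin (u*x) * f_asym f x) \<and>
        (\<integral>x. sin (u*x) * f_asym f x \<partial>lborel) = (\<integral>x. sin (u*x) * f x \<partial>lborel)"
        by (rule odd_sym[where h="\<lambda>x. sin (u*x)", OF sfi]) simp
      have "norm (\<integral>x. sin (u*x) * f_asym f x \<partial>lborel) \<le>
        (\<integral>x. Ka * (\<bar>sin (u*x)\<bar> * \<bar>x\<bar> powr (-1-Y)) + 1/e2\<^sup>2 * (M x + M (-x)) \<partial>lborel)"
      proof (rule Bochner_Integration.integral_norm_bound_integral)
        show "integrable lborel (\<lambda>x. sin (u*x) * f_asym f x)" using od by simp
        show "integrable lborel (\<lambda>x. Ka * (\<bar>sin (u*x)\<bar> * \<bar>x\<bar> powr (-1-Y)) + 1/e2\<^sup>2 * (M x + M (-x)))"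
          using sc3[of u] Mint Mneg by simp
        fix x :: real
        have T1: "0 \<le> Ka * (\<bar>sin (u*x)\<bar> * \<bar>x\<bar> powr (-1-Y))" using Ka by simp
        have T2: "0 \<le> 1/e2\<^sup>2 * (M x + M (-x))" using M0[of x] M0[of "-x"] e20 by simp
        have hx: "norm (sin (u*x) * f_asym f x) = \<bar>sin (u*x)\<bar> * \<bar>f_asym f x\<bar>"
          by (simp add: abs_mult)
        consider "x = 0" | "x \<noteq> 0" "\<bar>x\<bar> < e2" | "e2 \<le> \<bar>x\<bar>" by force
        then show "norm (sin (u*x) * f_asym f x) \<le> Ka * (\<bar>sin (u*x)\<bar> * \<bar>x\<bar> powr (-1-Y)) + 1/e2\<^sup>2 * (M x + M (-x))"
        proof cases
          case 1 then show ?thesis using T1 T2 by simp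
        next
          case 2
          have xd: "\<bar>x\<bar> < da" using 2 by (simp add: e2_def)
          have x1: "\<bar>x\<bar> \<le> 1" using 2 e21 by linarith
          have "\<bar>x\<bar> powr (- \<alpha>) \<le> \<bar>x\<bar> powr (-1-Y)"
            by (rule powr_mono') (use al x1 in auto)
          hence "\<bar>f_asym f x\<bar> \<le> Ka * \<bar>x\<bar> powr (-1-Y)"
            using Ba[OF 2(1) xd] Ka by (meson mult_left_mono less_imp_le order_trans)
          hence "\<bar>sin (u*x)\<bar> * \<bar>f_asym f x\<bar> \<le> \<bar>sin (u*x)\<bar> * (Ka * \<bar>x\<bar> powr (-1-Y))"
            by (intro mult_left_mono) auto
          then show ?thesis using T2 hx by (simp add: mult_ac)
        next
          case 3
          have "\<bar>sin (u*x)\<bar> * \<bar>f_asym f x\<bar> \<le> 1 * ((f x + f (-x)) / 2)"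
            by (rule mult_mono[OF abs_sin_le_one fas_le]) auto
          also have "\<dots> \<le> (M x / e2\<^sup>2 + M (-x) / e2\<^sup>2) / 2"
          proof -
            have a: "f x + f (-x) \<le> M x / e2\<^sup>2 + M (-x) / e2\<^sup>2"
              using farx(1,3)[OF e20 e21 3] by linarith
            show ?thesis using divide_right_mono[OF a, of 2] by simp
          qed
          also have "\<dots> \<le> 1/e2\<^sup>2 * (M x + M (-x))"
            using T2 by (simp add: add_divide_distrib[symmetric])
          finally show ?thesis using T1 hx by linarith
        qed
      qed
      also have "\<dots> = Ka * (\<bar>u\<bar> powr Y * K3v) + 1/e2\<^sup>2 * (Mi + Mi)"
        using sc3[of u] Mint Mneg by (simp add: Bochner_Integration.integral_add Mi_def)
      finally have B: "\<bar>Im (?A u)\<bar> \<le> Ka * (\<bar>u\<bar> powr Y * K3v) + 1/e2\<^sup>2 * (Mi + Mi)"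
        using od ImS by simp
      also have "\<dots> \<le> Ka * (W * K3v) + W * (1/e2\<^sup>2 * (Mi + Mi))"
      proof -
        have "\<bar>u\<bar> powr Y * K3v \<le> W * K3v" using W2 K3v0 by (intro mult_right_mono) auto
        hence "Ka * (\<bar>u\<bar> powr Y * K3v) \<le> Ka * (W * K3v)" using Ka by (intro mult_left_mono) auto
        moreover have "1 * (1/e2\<^sup>2 * (Mi + Mi)) \<le> W * (1/e2\<^sup>2 * (Mi + Mi))"
          using W3 Mi0 by (intro mult_right_mono) auto
        ultimately show ?thesis by linarith
      qed
      also have "\<dots> = P * W" by (simp add: P_def algebra_simps)
      finally show "\<bar>Im (?A u)\<bar> \<le> P * (1 + u\<^sup>2) powr (Y/2)" by (simp add: W_def)
    qed
  qed

  have ImB: "\<exists>P\<ge>0. \<forall>u. \<bar>Im (?A u)\<bar> \<le> P * (1 + u\<^sup>2) powr (Y/2)"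
    using cases Ima Imb Imc by blast
  then obtain P where P0: "P \<ge> 0" and PB: "\<And>u. \<bar>Im (?A u)\<bar> \<le> P * (1 + u\<^sup>2) powr (Y/2)" by blast
  define C1 where "C1 = 3*C*K1v + 2/\<epsilon>\<^sup>2 * Mi + P"
  define C2 where "C2 = c0*C/4"
  define C3 where "C3 = C2 * (1/\<epsilon>) powr Y"
  have C10: "C1 \<ge> 0" using C_pos K1v0 Mi0 P0 by (simp add: C1_def)
  have C20: "C2 > 0" using C_pos c0pos by (simp add: C2_def)
  have C30: "C3 \<ge> 0" using C20 by (simp add: C3_def)
  have main: "cmod (?A u) \<le> C1 * (1 + u\<^sup>2) powr (Y/2) \<and>
      Re (?A u) \<ge> C2 * \<bar>u\<bar> powr Y - C3 * (1 + u\<^sup>2) powr (0/2)" for u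
  proof
    define W where "W = (1 + u\<^sup>2) powr (Y/2)"
    have W2: "\<bar>u\<bar> powr Y \<le> W" unfolding W_def by (rule pw1) (use Y0 in simp)
    have W3: "1 \<le> W" unfolding W_def by (rule pw3) (use Y0 in simp)
    have "cmod (?A u) \<le> \<bar>Re (?A u)\<bar> + \<bar>Im (?A u)\<bar>" by (rule cmod_le)
    also have "\<dots> \<le> (3*C*(\<bar>u\<bar> powr Y * K1v) + 2/\<epsilon>\<^sup>2 * Mi) + P * W"
      using Re0[of u] Reup[of u] PB[of u] by (simp add: W_def)
    also have "\<dots> \<le> (3*C*(W * K1v) + W * (2/\<epsilon>\<^sup>2 * Mi)) + P * W"
    proof -
      have "\<bar>u\<bar> powr Y * K1v \<le> W * K1v" using W2 K1v0 by (intro mult_right_mono) auto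
      hence "3*C*(\<bar>u\<bar> powr Y * K1v) \<le> 3*C*(W * K1v)" using C_pos by (intro mult_left_mono) auto
      moreover have "1 * (2/\<epsilon>\<^sup>2 * Mi) \<le> W * (2/\<epsilon>\<^sup>2 * Mi)"
        using W3 Mi0 by (intro mult_right_mono) auto
      ultimately show ?thesis by linarith
    qed
    also have "\<dots> = C1 * W" by (simp add: C1_def algebra_simps)
    finally show "cmod (?A u) \<le> C1 * (1 + u\<^sup>2) powr (Y/2)" by (simp add: W_def)
  next
    have one: "(1 + u\<^sup>2) powr (0/2) = 1"
    proof -
      have "1 + u\<^sup>2 \<noteq> 0" by (smt (verit) zero_le_power2)
      then show ?thesis by simp
    qed
    show "Re (?A u) \<ge> C2 * \<bar>u\<bar> powr Y - C3 * (1 + u\<^sup>2) powr (0/2)"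
    proof (cases "1/\<epsilon> < \<bar>u\<bar>")
      case True
      then show ?thesis using Relow[OF True] C30 one by (simp add: C2_def)
    next
      case False
      have "\<bar>u\<bar> powr Y \<le> (1/\<epsilon>) powr Y" using False Y0 by (intro powr_mono2) auto
      hence "C2 * \<bar>u\<bar> powr Y \<le> C3" unfolding C3_def using C20 by (intro mult_left_mono) auto
      then show ?thesis using Re0[of u] one by simp
    qed
  qed
  show ?thesis unfolding has_sobolev_index_def
    apply (rule conjI, rule Y0, rule conjI, use Y2 in simp)
    apply (rule exI[of _ 0], rule exI[of _ C1], rule exI[of _ C2], rule exI[of _ C3])
    using Y0 C10 C20 C30 main by auto
qed

end
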